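(* Let $\mathcal P$ be a Poisson algebra over $\mathbb R$ (a commutative associative unital $\mathbb R$-algebra with an antisymmetric bilinear bracket $\{\cdot,\cdot\}_p$ satisfying the Jacobi identity and the Leibniz rule $\{X,YZ\}_p=\{X,Y\}_pZ+\{X,Z\}_pY$) which is an integral domain. Fix an integer $M\ge 1$ and put $L=\lfloor M/2\rfloor$. Let $A,B\in\mathcal P$ be algebraically independent over $\mathbb R$ (no nonzero real polynomial $P(x,y)$ satisfies $P(A,B)=0$), put $C=\{A,B\}_p$ and assume $C\neq 0$. Suppose there are real constants $\alpha_1,\dots,\alpha_{L+1},\delta,\epsilon,\beta,\lambda_1,\dots,\lambda_M,\rho,\eta,\omega_1,\dots,\omega_L,\zeta$ with $$\{A,C\}_p=\sum_{i=1}^{L+1}\alpha_iA^i+\delta B+\epsilon+2\beta AB,\qquad \{B,C\}_p=\sum_{i=1}^{M}\lambda_iA^i+\rho B^2+\eta B+\sum_{i=1}^{L}2\omega_iA^iB+\zeta .$$ Then $\eta=-\alpha_1$, $\rho=-\beta$ and $2\omega_i=-(i+1)\alpha_{i+1}$ for $i=1,\dots,L$. Consequently $$\{B,C\}_p=\sum_{i=1}^{M}\lambda_iA^i-\beta B^2-\alpha_1B-\sum_{i=1}^{L}(i+1)\alpha_{i+1}A^iB+\zeta .$$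
   Context: $\lfloor y\rfloor$ denotes the integer part of $y$, so $\lfloor M/2+1\rfloor=L+1$. A typical example of such $\mathcal P$ is the polynomial algebra $\mathbb R[q_1,q_2,p_1,p_2]$ with the canonical bracket $\{X,Y\}_p=\sum_{i=1}^2\left(\frac{\partial X}{\partial q_i}\frac{\partial Y}{\partial p_i}-\frac{\partial X}{\partial p_i}\frac{\partial Y}{\partial q_i}\right)$, with $A$ of degree 2 and $B$ of degree $M$ in the momenta. *)

theory Defs
  imports Complex_Main
begin

definition poisson_bracket :: "('a::{real_algebra_1,comm_ring_1} \<Rightarrow> 'a \<Rightarrow> 'a) \<Rightarrow> bool" where
  "poisson_bracket pb \<longleftrightarrow>
     (\<forall>x y z. pb (x + y) z = pb x z + pb y z) \<and>
     (\<forall>x y z. pb x (y + z) = pb x y + pb x z) \<and>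
     (\<forall>r x y. pb (r *\<^sub>R x) y = r *\<^sub>R pb x y) \<and>
     (\<forall>r x y. pb x (r *\<^sub>R y) = r *\<^sub>R pb x y) \<and>
     (\<forall>x y. pb x y = - pb y x) \<and>
     (\<forall>x y z. pb x (pb y z) + pb y (pb z x) + pb z (pb x y) = 0) \<and>
     (\<forall>x y z. pb x (y * z) = pb x y * z + pb x z * y)"

definition alg_indep2 :: "'a::{real_algebra_1,comm_ring_1} \<Rightarrow> 'a \<Rightarrow> bool" where
  "alg_indep2 A B \<longleftrightarrow>
     (\<forall>c :: nat \<Rightarrow> nat \<Rightarrow> real.
        finite {(i, j). c i j \<noteq> 0} \<longrightarrow>
        (\<Sum>(i, j)\<in>{(i, j). c i j \<noteq> 0}. c i j *\<^sub>R (A ^ i * B ^ j)) = 0 \<longrightarrow>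
        (\<forall>i j. c i j = 0))"

end

theory Submission imports Defs begin

context
  fixes pb :: "'a::{real_algebra_1,idom} \<Rightarrow> 'a \<Rightarrow> 'a"
  assumes pois: "poisson_bracket pb"
begin

lemma pb_addR: "pb x (y + z) = pb x y + pb x z" using pois unfolding poisson_bracket_def by blast
lemma pb_scaleR: "pb x (r *\<^sub>R y) = r *\<^sub>R pb x y" using pois unfolding poisson_bracket_def by blast
lemma pb_anti: "pb x y = - pb y x" using pois unfolding poisson_bracket_def by blast
lemma pb_jac: "pb x (pb y z) + pb y (pb z x) + pb z (pb x y) = 0" using pois unfolding poisson_bracket_def by blast
lemma pb_leib: "pb x (y * z) = pb x y * z + pb x z * y" using pois unfolding poisson_bracket_def by blast

lemma pb_self: "pb x x = 0"
proof -
  have "pb x x = - pb x x" using pb_anti by blast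
  hence "(2::real) *\<^sub>R pb x x = 0" by (simp add: scaleR_2)
  thus ?thesis by simp
qed

lemma pb_zero: "pb x 0 = 0"
  using pb_addR[of x 0 0] by simp

lemma pb_minus: "pb x (y - z) = pb x y - pb x z"
proof -
  have "pb x y = pb x (y - z) + pb x z" using pb_addR[of x "y - z" z] by simp
  thus ?thesis by (simp add: algebra_simps)
qed

lemma pb_one: "pb x 1 = 0"
  using pb_leib[of x 1 1] by simp

lemma pb_const: "pb x (r *\<^sub>R 1) = 0"
  by (simp add: pb_scaleR pb_one)

lemma pb_sum: "pb x (sum f S) = (\<Sum>i\<in>S. pb x (f i))"
proof (induction S rule: infinite_finite_induct)
  case (infinite A) thus ?case by (simp add: pb_zero)
next
  case empty thus ?case by (simp add: pb_zero)
next
  case (insert a F) thus ?case by (simp add: pb_addR)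
qed

lemma pb_pow: "pb x (y ^ Suc n) = of_nat (Suc n) * y ^ n * pb x y"
proof (induction n)
  case 0 thus ?case by simp
next
  case (Suc n)
  have "pb x (y ^ Suc (Suc n)) = pb x (y * y ^ Suc n)" by simp
  also have "\<dots> = pb x y * y ^ Suc n + pb x (y ^ Suc n) * y" by (rule pb_leib)
  also have "\<dots> = of_nat (Suc (Suc n)) * y ^ Suc n * pb x y"
    using Suc by (simp add: algebra_simps)
  finally show ?case .
qed

end

lemma poly_zero:
  fixes A B :: "'a::{real_algebra_1,idom}"
  assumes indep: "alg_indep2 A B" and fin: "finite S"
    and sub: "{(i, j). c i j \<noteq> 0} \<subseteq> S"
    and z: "(\<Sum>(i, j)\<in>S. c i j *\<^sub>R (A ^ i * B ^ j)) = 0"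
  shows "c i j = 0"
proof -
  have f: "finite {(i, j). c i j \<noteq> 0}" using finite_subset[OF sub fin] .
  have "(\<Sum>(i, j)\<in>{(i, j). c i j \<noteq> 0}. c i j *\<^sub>R (A ^ i * B ^ j)) = (\<Sum>(i, j)\<in>S. c i j *\<^sub>R (A ^ i * B ^ j))"
    by (rule sum.mono_neutral_left[OF fin sub]) auto
  hence "(\<Sum>(i, j)\<in>{(i, j). c i j \<noteq> 0}. c i j *\<^sub>R (A ^ i * B ^ j)) = 0" using z by simp
  hence "\<forall>i j. c i j = 0" using f indep unfolding alg_indep2_def by blast
  thus ?thesis by blast
qed

theorem proposition1:
  fixes pb :: "'a::{real_algebra_1,idom} \<Rightarrow> 'a \<Rightarrow> 'a"
    and A B :: 'a and M :: nat
    and \<alpha> lam \<omega> :: "nat \<Rightarrow> real"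
    and \<delta> \<epsilon> \<beta> \<rho> \<eta> \<zeta> :: real
  assumes pois: "poisson_bracket pb"
    and M: "M \<ge> 1"
    and indep: "alg_indep2 A B"
    and C_nz: "pb A B \<noteq> 0"
    and AC: "pb A (pb A B) =
      (\<Sum>i\<in>{1..M div 2 + 1}. \<alpha> i *\<^sub>R A ^ i) + \<delta> *\<^sub>R B + \<epsilon> *\<^sub>R 1 + (2 * \<beta>) *\<^sub>R (A * B)"
    and BC: "pb B (pb A B) =
      (\<Sum>i\<in>{1..M}. lam i *\<^sub>R A ^ i) + \<rho> *\<^sub>R B ^ 2 + \<eta> *\<^sub>R B
      + (\<Sum>i\<in>{1..M div 2}. (2 * \<omega> i) *\<^sub>R (A ^ i * B)) + \<zeta> *\<^sub>R 1"
  shows "\<eta> = - \<alpha> 1 \<and> \<rho> = - \<beta> \<and>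
         (\<forall>i\<in>{1..M div 2}. 2 * \<omega> i = - (real i + 1) * \<alpha> (i + 1)) \<and>
         pb B (pb A B) =
           (\<Sum>i\<in>{1..M}. lam i *\<^sub>R A ^ i) - \<beta> *\<^sub>R B ^ 2 - \<alpha> 1 *\<^sub>R B
           - (\<Sum>i\<in>{1..M div 2}. ((real i + 1) * \<alpha> (i + 1)) *\<^sub>R (A ^ i * B)) + \<zeta> *\<^sub>R 1"
proof -
  define C where "C = pb A B"
  define L where "L = M div 2"
  note pa = pb_addR[OF pois] pb_scaleR[OF pois] pb_self[OF pois] pb_one[OF pois] pb_sum[OF pois]
    pb_minus[OF pois] pb_zero[OF pois]
  have neg: "pb x (- y) = - pb x y" for x y using pb_minus[OF pois, of x 0 y] pb_zero[OF pois] by simp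
  have jac: "pb A (pb B C) = pb B (pb A C)"
  proof -
    have "pb A (pb B C) + pb B (pb C A) + pb C (pb A B) = 0" by (rule pb_jac[OF pois])
    moreover have "pb C A = - pb A C" by (rule pb_anti[OF pois])
    ultimately show ?thesis by (simp add: C_def[symmetric] pb_self[OF pois] neg)
  qed
  have powB: "pb B (A ^ i) = - (of_nat i * A ^ (i - 1) * C)" if i1: "i \<ge> 1" for i
  proof -
    obtain n where i: "i = Suc n" using i1 by (cases i) auto
    show ?thesis unfolding i using pb_pow[OF pois, of B A n] pb_anti[OF pois, of B A]
      by (simp add: C_def)
  qed
  have powA: "pb A (A ^ i) = 0" for i
    by (cases i) (simp_all only: pb_pow[OF pois] pb_self[OF pois] pb_one[OF pois] power_0 mult_zero_right)
  define Y where "Y = (\<Sum>i\<in>{1..L+1}. \<alpha> i *\<^sub>R (of_nat i * A ^ (i - 1))) + (2 * \<beta>) *\<^sub>R B"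
  define X where "X = (2 * \<rho>) *\<^sub>R B + \<eta> *\<^sub>R 1 + (\<Sum>i\<in>{1..L}. (2 * \<omega> i) *\<^sub>R A ^ i)"
  have eY: "pb B (pb A C) = - (C * Y)"
  proof -
    have "pb B (pb A C) = (\<Sum>i\<in>{1..L+1}. \<alpha> i *\<^sub>R pb B (A ^ i)) + \<delta> *\<^sub>R pb B B
        + \<epsilon> *\<^sub>R pb B 1 + (2 * \<beta>) *\<^sub>R pb B (A * B)"
      unfolding C_def AC L_def by (simp add: pa)
    also have "\<dots> = (\<Sum>i\<in>{1..L+1}. - (\<alpha> i *\<^sub>R (C * (of_nat i * A ^ (i - 1)))))
        + (2 * \<beta>) *\<^sub>R (- (C * B))"
      by (intro arg_cong2[where f="(+)"] sum.cong refl)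
        (auto simp: powB pa pb_leib[OF pois] pb_anti[OF pois, of B A] C_def mult.commute)
    also have "\<dots> = - (C * Y)" unfolding Y_def
      by (simp add: sum_negf distrib_left sum_distrib_left)
    finally show ?thesis .
  qed
  have eX: "pb A (pb B C) = C * X"
  proof -
    have "pb A (pb B C) = (\<Sum>i\<in>{1..M}. lam i *\<^sub>R pb A (A ^ i)) + \<rho> *\<^sub>R pb A (B ^ 2) + \<eta> *\<^sub>R pb A B
        + (\<Sum>i\<in>{1..L}. (2 * \<omega> i) *\<^sub>R pb A (A ^ i * B)) + \<zeta> *\<^sub>R pb A 1"
      unfolding C_def BC L_def by (simp add: pa)
    also have "\<dots> = \<rho> *\<^sub>R (C * (2 * B)) + \<eta> *\<^sub>R C
        + (\<Sum>i\<in>{1..L}. (2 * \<omega> i) *\<^sub>R (C * A ^ i))"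
      using pb_pow[OF pois, of A B 1]
      by (simp add: powA pa pb_leib[OF pois] C_def mult.commute numeral_2_eq_2)
    also have "\<dots> = C * X" unfolding X_def
      by (simp add: distrib_left sum_distrib_left algebra_simps scaleR_conv_of_real)
    finally show ?thesis .
  qed
  have "C * (X + Y) = 0" using jac eX eY by (simp add: distrib_left)
  hence XY: "X + Y = 0" using C_nz by (simp add: C_def)
  have sY: "(\<Sum>i\<in>{1..L+1}. \<alpha> i *\<^sub>R (of_nat i * A ^ (i - 1)))
      = \<alpha> 1 *\<^sub>R 1 + (\<Sum>i\<in>{1..L}. ((real i + 1) * \<alpha> (i + 1)) *\<^sub>R A ^ i)"
  proof -
    have "(\<Sum>i\<in>{1..L+1}. \<alpha> i *\<^sub>R (of_nat i * A ^ (i - 1)))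
      = \<alpha> 1 *\<^sub>R 1 + (\<Sum>i\<in>{Suc 1..Suc L}. \<alpha> i *\<^sub>R (of_nat i * A ^ (i - 1)))"
      by (subst sum.atLeast_Suc_atMost) auto
    also have "(\<Sum>i\<in>{Suc 1..Suc L}. \<alpha> i *\<^sub>R (of_nat i * A ^ (i - 1)))
        = (\<Sum>i\<in>{1..L}. ((real i + 1) * \<alpha> (i + 1)) *\<^sub>R A ^ i)"
      unfolding sum.shift_bounds_cl_Suc_ivl
      by (rule sum.cong) (auto simp: scaleR_conv_of_real algebra_simps)
    finally show ?thesis .
  qed
  define c where "c = (\<lambda>(i::nat) (j::nat). if j = 0 then (if i = 0 then \<eta> + \<alpha> 1 else if i \<le> L then 2 * \<omega> i + (real i + 1) * \<alpha> (i + 1) else 0)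
     else if j = 1 \<and> i = 0 then 2 * \<rho> + 2 * \<beta> else (0::real))"
  define S where "S = insert (0::nat, 1::nat) ((\<lambda>i. (i, 0)) ` {0..L})"
  have finS: "finite S" unfolding S_def by simp
  have subS: "{(i, j). c i j \<noteq> 0} \<subseteq> S" unfolding S_def c_def
    by (auto split: if_splits)
  have "(\<Sum>(i, j)\<in>S. c i j *\<^sub>R (A ^ i * B ^ j)) = c 0 1 *\<^sub>R B + (\<Sum>i\<in>{0..L}. c i 0 *\<^sub>R A ^ i)"
    unfolding S_def by (subst sum.insert) (auto simp: sum.reindex inj_on_def)
  also have "\<dots> = c 0 1 *\<^sub>R B + c 0 0 *\<^sub>R 1 + (\<Sum>i\<in>{Suc 0..L}. c i 0 *\<^sub>R A ^ i)"
    by (subst sum.atLeast_Suc_atMost) auto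
  also have "\<dots> = X + Y"
    unfolding X_def Y_def sY c_def
    by (simp add: sum.distrib scaleR_add_left algebra_simps)
  finally have z: "(\<Sum>(i, j)\<in>S. c i j *\<^sub>R (A ^ i * B ^ j)) = 0" using XY by simp
  have cz: "c i j = 0" for i j by (rule poly_zero[OF indep finS subS z])
  have h1: "\<eta> = - \<alpha> 1" using cz[of 0 0] by (simp add: c_def)
  have h2: "\<rho> = - \<beta>" using cz[of 0 1] by (simp add: c_def)
  have h3: "\<forall>i\<in>{1..M div 2}. 2 * \<omega> i = - (real i + 1) * \<alpha> (i + 1)"
  proof
    fix i assume "i \<in> {1..M div 2}"
    thus "2 * \<omega> i = - (real i + 1) * \<alpha> (i + 1)" using cz[of i 0] by (simp add: c_def L_def algebra_simps)
  qed
  have h4: "(\<Sum>i\<in>{1..M div 2}. (2 * \<omega> i) *\<^sub>R (A ^ i * B))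
     = - (\<Sum>i\<in>{1..M div 2}. ((real i + 1) * \<alpha> (i + 1)) *\<^sub>R (A ^ i * B))"
    unfolding sum_negf[symmetric]
  proof (rule sum.cong)
    fix x assume "x \<in> {1..M div 2}"
    hence "2 * \<omega> x = - ((real x + 1) * \<alpha> (x + 1))" using h3 by (simp add: algebra_simps)
    thus "(2 * \<omega> x) *\<^sub>R (A ^ x * B) = - (((real x + 1) * \<alpha> (x + 1)) *\<^sub>R (A ^ x * B))"
      by (simp only: scaleR_minus_left)
  qed simp
  show ?thesis using h1 h2 h3 BC h4 by (simp add: algebra_simps)
qed
end
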